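(* If $t$ is an odd positive integer, then there does not exist a skew starter in $\mathbb{Z}_{3t}$.
   Context: A skew starter in $\mathbb{Z}_g$ ($g$ odd) is a set of $(g-1)/2$ unordered pairs $\{\{x_i,y_i\}\}$ such that $\{x_i,y_i\}=\mathbb{Z}_g\setminus\{0\}$, $\{\pm(x_i-y_i)\}=\mathbb{Z}_g\setminus\{0\}$, and $\{\pm(x_i+y_i)\}=\mathbb{Z}_g\setminus\{0\}$. *)

theory Defs
  imports Main
begin

text \<open>Z_g is represented by the residues {0..<g} of type int; arithmetic is taken mod g.
  A skew starter is a set S of (g-1)/2 unordered pairs {x,y} (x \<noteq> y) of residues.\<close>

definition skew_starter :: "int \<Rightarrow> int set set \<Rightarrow> bool" where
  "skew_starter g S \<longleftrightarrow>
     finite S \<and> card S = nat ((g - 1) div 2) \<and>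
     (\<forall>p\<in>S. \<exists>x y. p = {x, y} \<and> x \<noteq> y \<and> x \<in> {0..<g} \<and> y \<in> {0..<g}) \<and>
     \<Union>S = {1..<g} \<and>
     {d. \<exists>x y. {x, y} \<in> S \<and> x \<noteq> y \<and> (d = (x - y) mod g \<or> d = (y - x) mod g)} = {1..<g} \<and>
     {s. \<exists>x y. {x, y} \<in> S \<and> x \<noteq> y \<and> (s = (x + y) mod g \<or> s = (- (x + y)) mod g)} = {1..<g}"

end

theory Submission
  imports Defs "HOL-Number_Theory.Cong"
begin

lemma card_UN_eq_disj:
  assumes "finite S" "\<forall>p\<in>S. finite (F p)"
    "card (\<Union>p\<in>S. F p) = (\<Sum>p\<in>S. card (F p))"
  shows "\<forall>p\<in>S. \<forall>q\<in>S. p \<noteq> q \<longrightarrow> F p \<inter> F q = {}"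
  using assms
proof (induction S rule: finite_induct)
  case empty
  then show ?case by simp
next
  case (insert a S)
  let ?U = "\<Union>p\<in>S. F p"
  have fU: "finite ?U" using insert by auto
  have fa: "finite (F a)" using insert by auto
  have le: "card ?U \<le> (\<Sum>p\<in>S. card (F p))" using card_UN_le[OF insert(1), of F] by simp
  have ci: "card (F a) + card ?U = card (F a \<union> ?U) + card (F a \<inter> ?U)"
    using card_Un_Int[OF fa fU] .
  have "card (F a \<union> ?U) = card (F a) + (\<Sum>p\<in>S. card (F p))"
    using insert by simp
  then have "card (F a \<inter> ?U) = 0" and eqS: "card ?U = (\<Sum>p\<in>S. card (F p))"
    using ci le by linarith+
  then have disj: "F a \<inter> ?U = {}" using fa by simp
  have IH: "\<forall>p\<in>S. \<forall>q\<in>S. p \<noteq> q \<longrightarrow> F p \<inter> F q = {}"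
    using insert eqS by simp
  show ?case using IH disj by blast
qed

lemma two_family:
  fixes h :: "'a \<Rightarrow> int"
  assumes "finite S" "\<forall>p\<in>S. finite (F p) \<and> card (F p) \<le> 2"
    "card (\<Union>p\<in>S. F p) = 2 * card S"
  shows "(\<forall>p\<in>S. card (F p) = 2) \<and> sum h (\<Union>p\<in>S. F p) = (\<Sum>p\<in>S. sum h (F p))"
proof -
  have a: "card (\<Union>p\<in>S. F p) \<le> (\<Sum>p\<in>S. card (F p))" using card_UN_le[OF assms(1)] .
  have b: "(\<Sum>p\<in>S. card (F p)) \<le> (\<Sum>p\<in>S. 2)" by (rule sum_mono) (use assms in auto)
  have eq: "(\<Sum>p\<in>S. card (F p)) = (\<Sum>p\<in>S. 2)" using a b assms(3) by simp
  have c2: "\<forall>p\<in>S. card (F p) = 2"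
    using sum_mono_inv[OF eq] assms(1,2) by blast
  have "card (\<Union>p\<in>S. F p) = (\<Sum>p\<in>S. card (F p))" using eq assms(3) by simp
  then have "\<forall>p\<in>S. \<forall>q\<in>S. p \<noteq> q \<longrightarrow> F p \<inter> F q = {}"
    using card_UN_eq_disj assms by blast
  then have "sum h (\<Union>p\<in>S. F p) = (\<Sum>p\<in>S. sum h (F p))"
    using sum.UNION_disjoint[OF assms(1)] assms(2) by blast
  with c2 show ?thesis by blast
qed

lemma sumsq: "6 * (\<Sum>z\<in>{1..<int n}. z^2) = (int n - 1) * int n * (2 * int n - 1)"
proof (induction n)
  case 0
  then show ?case by simp
next
  case (Suc n)
  show ?case
  proof (cases "n = 0")
    case True
    then show ?thesis by simp
  next
    case False
    have "{1..<int (Suc n)} = insert (int n) {1..<int n}" using False by auto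
    then have "(\<Sum>z\<in>{1..<int (Suc n)}. z^2) = int n ^ 2 + (\<Sum>z\<in>{1..<int n}. z^2)" by simp
    then show ?thesis using Suc.IH by (simp add: algebra_simps power2_eq_square)
  qed
qed

theorem mainTheorem7:
  fixes t :: int
  assumes "t > 0" and "odd t"
  shows "\<not> (\<exists>S. skew_starter (3 * t) S)"
proof
  assume "\<exists>S. skew_starter (3 * t) S"
  then obtain S where sk: "skew_starter (3 * t) S" by blast
  define g where "g = 3 * t"
  have gpos: "g > 0" using assms g_def by simp
  have godd: "odd g" using assms g_def by simp
  define m where "m = nat ((g - 1) div 2)"
  have gm: "g - 1 = 2 * int m" using godd gpos m_def by (auto elim!: oddE)
  have cS: "card S = m" using sk by (simp add: skew_starter_def g_def m_def)
  have "card {1..<g} = nat (g - 1)" by simp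
  then have cardI: "card {1..<g} = 2 * card S" using cS gm by simp
  have fin: "finite S" using sk by (simp add: skew_starter_def)
  have pairs: "\<forall>p\<in>S. \<exists>x y. p = {x, y} \<and> x \<noteq> y" using sk by (fastforce simp: skew_starter_def)
  have U: "\<Union>S = {1..<g}" using sk by (simp add: skew_starter_def g_def)
  define Fd where "Fd p = {d. \<exists>x y. p = {x, y} \<and> x \<noteq> y \<and> (d = (x - y) mod g \<or> d = (y - x) mod g)}" for p :: "int set"
  define Fs where "Fs p = {d. \<exists>x y. p = {x, y} \<and> x \<noteq> y \<and> (d = (x + y) mod g \<or> d = (- (x + y)) mod g)}" for p :: "int set"
  have D: "(\<Union>p\<in>S. Fd p) = {1..<g}"
  proof -
    have "(\<Union>p\<in>S. Fd p) = {d. \<exists>x y. {x, y} \<in> S \<and> x \<noteq> y \<and> (d = (x - y) mod g \<or> d = (y - x) mod g)}"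
      unfolding Fd_def by blast
    then show ?thesis using sk by (simp add: skew_starter_def g_def)
  qed
  have Ss: "(\<Union>p\<in>S. Fs p) = {1..<g}"
  proof -
    have "(\<Union>p\<in>S. Fs p) = {d. \<exists>x y. {x, y} \<in> S \<and> x \<noteq> y \<and> (d = (x + y) mod g \<or> d = (- (x + y)) mod g)}"
      unfolding Fs_def by blast
    then show ?thesis using sk by (simp add: skew_starter_def g_def)
  qed
  have Fd_eq: "Fd {x, y} = {(x - y) mod g, (y - x) mod g}" if "x \<noteq> y" for x y
    using that unfolding Fd_def by (auto simp: doubleton_eq_iff)
  have Fs_eq: "Fs {x, y} = {(x + y) mod g, (- (x + y)) mod g}" if "x \<noteq> y" for x y
  proof (rule set_eqI, rule iffI)
    fix d assume "d \<in> Fs {x, y}"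
    then obtain a b where ab: "{x, y} = {a, b}" "d = (a + b) mod g \<or> d = (- (a + b)) mod g"
      unfolding Fs_def by blast
    have "a + b = x + y" using ab(1) by (auto simp: doubleton_eq_iff)
    then show "d \<in> {(x + y) mod g, (- (x + y)) mod g}" using ab(2) by simp
  next
    fix d assume "d \<in> {(x + y) mod g, (- (x + y)) mod g}"
    then show "d \<in> Fs {x, y}" unfolding Fs_def using that by blast
  qed
  define Q where "Q = (\<Sum>z\<in>{1..<g}. z^2)"
  have c0: "\<forall>p\<in>S. finite p \<and> card p \<le> 2"
    using pairs by (auto simp: card_insert_if)
  have cd: "\<forall>p\<in>S. finite (Fd p) \<and> card (Fd p) \<le> 2"
    using pairs Fd_eq by (fastforce simp: card_insert_if)
  have cs: "\<forall>p\<in>S. finite (Fs p) \<and> card (Fs p) \<le> 2"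
    using pairs Fs_eq by (fastforce simp: card_insert_if)
  have r0: "Q = (\<Sum>p\<in>S. \<Sum>z\<in>p. z^2)"
    using two_family[OF fin c0, of "\<lambda>z. z^2"] U cardI Q_def by simp
  have rd: "(\<forall>p\<in>S. card (Fd p) = 2) \<and> Q = (\<Sum>p\<in>S. \<Sum>z\<in>Fd p. z^2)"
    using two_family[OF fin cd, of "\<lambda>z. z^2"] D cardI Q_def by simp
  have rs: "(\<forall>p\<in>S. card (Fs p) = 2) \<and> Q = (\<Sum>p\<in>S. \<Sum>z\<in>Fs p. z^2)"
    using two_family[OF fin cs, of "\<lambda>z. z^2"] Ss cardI Q_def by simp
  have pd: "[(\<Sum>z\<in>Fd p. z^2) = 2 * (2 * (\<Sum>z\<in>p. z^2) - (\<Sum>z\<in>p. z)^2)] (mod g)" if pS: "p \<in> S" for p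
  proof -
    obtain x y where p: "p = {x, y}" "x \<noteq> y" using bspec[OF pairs pS] by auto
    have c2: "card (Fd p) = 2" using rd pS by blast
    have c2': "card {(x - y) mod g, (y - x) mod g} = 2" using c2 p Fd_eq by simp
    have ne: "(x - y) mod g \<noteq> (y - x) mod g"
    proof
      assume "(x - y) mod g = (y - x) mod g"
      then show False using c2' by simp
    qed
    have e1: "(\<Sum>z\<in>Fd p. z^2) = ((x - y) mod g)^2 + ((y - x) mod g)^2"
      using p Fd_eq ne by simp
    have m1: "[(x - y) mod g = x - y] (mod g)" by (simp add: cong_def)
    have m2: "[(y - x) mod g = y - x] (mod g)" by (simp add: cong_def)
    have e2: "[((x - y) mod g)^2 + ((y - x) mod g)^2 = (x - y)^2 + (y - x)^2] (mod g)"
      by (intro cong_add cong_pow m1 m2)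
    have e3: "(x - y)^2 + (y - x)^2 = 2 * (2 * (\<Sum>z\<in>p. z^2) - (\<Sum>z\<in>p. z)^2)"
      using p by (simp add: power2_eq_square algebra_simps)
    show ?thesis using e2 unfolding e1 e3 .
  qed
  have ps: "[(\<Sum>z\<in>Fs p. z^2) = 2 * (\<Sum>z\<in>p. z)^2] (mod g)" if pS: "p \<in> S" for p
  proof -
    obtain x y where p: "p = {x, y}" "x \<noteq> y" using bspec[OF pairs pS] by auto
    have c2: "card (Fs p) = 2" using rs pS by blast
    have c2': "card {(x + y) mod g, (- (x + y)) mod g} = 2" using c2 p Fs_eq by simp
    have ne: "(x + y) mod g \<noteq> (- (x + y)) mod g"
    proof
      assume "(x + y) mod g = (- (x + y)) mod g"
      then show False using c2' by simp
    qed
    have e1: "(\<Sum>z\<in>Fs p. z^2) = ((x + y) mod g)^2 + ((- (x + y)) mod g)^2"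
      using p Fs_eq ne by simp
    have m1: "[(x + y) mod g = x + y] (mod g)" by (simp add: cong_def)
    have m2: "[(- (x + y)) mod g = - (x + y)] (mod g)" by (simp add: cong_def)
    have e2: "[((x + y) mod g)^2 + ((- (x + y)) mod g)^2 = (x + y)^2 + (- (x + y))^2] (mod g)"
      by (intro cong_add cong_pow m1 m2)
    have e3: "(x + y)^2 + (- (x + y))^2 = 2 * (\<Sum>z\<in>p. z)^2"
      using p by (simp add: power2_eq_square algebra_simps)
    show ?thesis using e2 unfolding e1 e3 .
  qed
  have "[Q = (\<Sum>p\<in>S. 2 * (2 * (\<Sum>z\<in>p. z^2) - (\<Sum>z\<in>p. z)^2))] (mod g)"
    using rd cong_sum[of S _ _ g, OF pd] by simp
  moreover have "[Q = (\<Sum>p\<in>S. 2 * (\<Sum>z\<in>p. z)^2)] (mod g)"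
    using rs cong_sum[of S _ _ g, OF ps] by simp
  ultimately have "[Q + Q = (\<Sum>p\<in>S. 2 * (2 * (\<Sum>z\<in>p. z^2) - (\<Sum>z\<in>p. z)^2)) + (\<Sum>p\<in>S. 2 * (\<Sum>z\<in>p. z)^2)] (mod g)"
    by (rule cong_add)
  also have "(\<Sum>p\<in>S. 2 * (2 * (\<Sum>z\<in>p. z^2) - (\<Sum>z\<in>p. z)^2)) + (\<Sum>p\<in>S. 2 * (\<Sum>z\<in>p. z)^2)
      = (\<Sum>p\<in>S. 2 * (2 * (\<Sum>z\<in>p. z^2) - (\<Sum>z\<in>p. z)^2) + 2 * (\<Sum>z\<in>p. z)^2)"
    by (rule sum.distrib[symmetric])
  also have "\<dots> = (\<Sum>p\<in>S. 4 * (\<Sum>z\<in>p. z^2))"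
    by (rule sum.cong) (simp_all add: algebra_simps)
  also have "\<dots> = 4 * Q" by (simp add: r0 sum_distrib_left)
  finally have c: "[Q + Q = 4 * Q] (mod g)" .
  then have "g dvd 4 * Q - (Q + Q)" by (simp add: cong_iff_dvd_diff)
  then have "g dvd 2 * Q" by simp
  then have h1: "3 * g dvd 3 * (2 * Q)" by (rule mult_dvd_mono[OF dvd_refl])
  have h2: "3 * (2 * Q) = g * ((g - 1) * (2 * g - 1))"
    using sumsq[of "nat g"] gpos Q_def by (simp add: algebra_simps)
  have "g * 3 dvd g * ((g - 1) * (2 * g - 1))" using h1 h2 by (simp add: mult.commute)
  then have "3 dvd (g - 1) * (2 * g - 1)" using gpos by simp
  moreover have "(g - 1) * (2 * g - 1) = 3 * (6 * t * t - 3 * t) + 1" using g_def by (simp add: algebra_simps)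
  ultimately have "3 dvd (3 * (6 * t * t - 3 * t) + 1)" by simp
  then show False by presburger
qed

end
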